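(* Let $G$ be a finite group and $S\in\mathcal F(G)$. (1) If $S'\in\mathcal F(G)$ and $S\sim S'$, then $\pi(S)=\pi(S')$. (2) Let $S'\in\mathcal F(G)$. If either (a) $S,S'\in\mathcal F(\mathsf Z(G))$, or (b) there is $g\in\pi(S)$ with $\pi(S)=gG'$, then $S\sim S'$ if and only if $\pi(S)=\pi(S')$. (3) If $g,h\in G$ with $g\neq h$, then the one-term sequences $g$ and $h$ satisfy $g\not\sim h$; in particular $|G|\le|\mathcal C(\mathcal B(G),\mathcal F(G))|$. (4) If $g\in\mathsf Z(G)$ and $h\in G$, then $g\boldsymbol{\cdot}h\sim gh$ (the latter being the one-term sequence consisting of the product $gh$). (5) $|\pi(S)|=1$ if and only if the subgroup $\langle\mathrm{supp}(S)\rangle$ is abelian.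
   Context: Let $G$ be a finite group written multiplicatively with identity $1_G$; $G'$ is its commutator subgroup and $\mathsf Z(G)$ its center. $\mathcal F(G_0)$ (for $G_0\subset G$) is the free abelian monoid with basis $G_0$; its elements are sequences $S=g_1\boldsymbol{\cdot}\ldots\boldsymbol{\cdot}g_\ell$ (unordered, repetitions allowed; operation $\boldsymbol{\cdot}$ is concatenation, identity the empty sequence $1_{\mathcal F(G)}$), $\mathrm{supp}(S)$ is the set of distinct terms. $\pi(S)=\{g_{\tau(1)}\cdots g_{\tau(\ell)}:\tau\text{ a permutation of }[1,\ell]\}\subset G$, with $\pi(1_{\mathcal F(G)})=\{1_G\}$. $\mathcal B(G)=\{S\in\mathcal F(G):1_G\in\pi(S)\}$. For $S,S'\in\mathcal F(G)$, write $S\sim S'$ if for all $T\in\mathcal F(G)$: $S\boldsymbol{\cdot}T\in\mathcal B(G)\iff S'\boldsymbol{\cdot}T\in\mathcal B(G)$. This is a congruence on $\mathcal F(G)$; $[S]$ denotes the class of $S$, and the class semigroup $\mathcal C(\mathcal B(G),\mathcal F(G))=\{[S]:S\in\mathcal F(G)\}$ is a commutative semigroup written additively, $[S]+[T]=[S\boldsymbol{\cdot}T]$, with zero $[1_{\mathcal F(G)}]$. *)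

theory Defs
  imports "HOL-Algebra.Algebra" "HOL-Library.Multiset"
begin

definition seqs :: "('a, 'b) monoid_scheme \<Rightarrow> 'a set \<Rightarrow> 'a multiset set" where
  "seqs G G0 = {S. set_mset S \<subseteq> G0}"

definition lprod :: "('a, 'b) monoid_scheme \<Rightarrow> 'a list \<Rightarrow> 'a" where
  "lprod G xs = foldr (\<lambda>x y. x \<otimes>\<^bsub>G\<^esub> y) xs \<one>\<^bsub>G\<^esub>"

definition prods :: "('a, 'b) monoid_scheme \<Rightarrow> 'a multiset \<Rightarrow> 'a set" where
  "prods G S = {lprod G xs | xs. mset xs = S}"

definition zss :: "('a, 'b) monoid_scheme \<Rightarrow> 'a multiset set" where
  "zss G = {S \<in> seqs G (carrier G). \<one>\<^bsub>G\<^esub> \<in> prods G S}"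

definition seq_equiv :: "('a, 'b) monoid_scheme \<Rightarrow> 'a multiset \<Rightarrow> 'a multiset \<Rightarrow> bool" where
  "seq_equiv G S S' \<longleftrightarrow>
     (\<forall>T \<in> seqs G (carrier G). (S + T \<in> zss G) \<longleftrightarrow> (S' + T \<in> zss G))"

definition seq_class :: "('a, 'b) monoid_scheme \<Rightarrow> 'a multiset \<Rightarrow> 'a multiset set" where
  "seq_class G S = {S' \<in> seqs G (carrier G). seq_equiv G S S'}"

definition class_semigroup :: "('a, 'b) monoid_scheme \<Rightarrow> 'a multiset set set" where
  "class_semigroup G = seq_class G ` seqs G (carrier G)"

definition grp_center :: "('a, 'b) monoid_scheme \<Rightarrow> 'a set" where
  "grp_center G = {z \<in> carrier G. \<forall>x \<in> carrier G. z \<otimes>\<^bsub>G\<^esub> x = x \<otimes>\<^bsub>G\<^esub> z}"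

end

theory Submission
  imports Defs
begin

lemma (in monoid) lprod_Nil[simp]: "lprod G [] = \<one>" by (simp add: lprod_def)
lemma (in monoid) lprod_Cons[simp]: "lprod G (x # xs) = x \<otimes> lprod G xs" by (simp add: lprod_def)

lemma (in monoid) lprod_closed[simp]: "set xs \<subseteq> carrier G \<Longrightarrow> lprod G xs \<in> carrier G"
  by (induction xs) auto

lemma (in monoid) lprod_append: "set xs \<subseteq> carrier G \<Longrightarrow> set ys \<subseteq> carrier G \<Longrightarrow>
   lprod G (xs @ ys) = lprod G xs \<otimes> lprod G ys"
  by (induction xs) (auto simp: m_assoc)

lemma (in monoid) lprod_comm: "x \<in> carrier G \<Longrightarrow> set xs \<subseteq> carrier G \<Longrightarrow> (\<forall>y\<in>set xs. x \<otimes> y = y \<otimes> x)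
   \<Longrightarrow> x \<otimes> lprod G xs = lprod G xs \<otimes> x"
proof (induction xs)
  case (Cons a xs)
  then have "x \<otimes> (a \<otimes> lprod G xs) = a \<otimes> (x \<otimes> lprod G xs)"
    by (metis list.set_intros(1) lprod_closed m_assoc set_subset_Cons subset_code(1))
  also have "\<dots> = a \<otimes> (lprod G xs \<otimes> x)" using Cons by auto
  finally show ?case using Cons by (simp add: m_assoc)
qed auto

lemma (in monoid) lprod_perm:
  assumes "set xs \<subseteq> carrier G" "\<forall>x\<in>set xs. \<forall>y\<in>set xs. x \<otimes> y = y \<otimes> x" "mset xs = mset ys"
  shows "lprod G xs = lprod G ys"
  using assms
proof (induction xs arbitrary: ys)
  case Nil thus ?case by simp
next
  case (Cons x xs)
  have "x \<in> set ys" using Cons.prems(3) by (metis list.set_intros(1) set_mset_mset)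
  then obtain a b where ys: "ys = a @ x # b" by (meson split_list)
  have sy: "set ys = set (x#xs)" using Cons.prems(3) by (metis set_mset_mset)
  have ms: "mset xs = mset (a @ b)" using Cons.prems(3) ys by simp
  have sab: "set (a@b) = set xs" using ms by (metis set_mset_mset)
  have c: "set a \<subseteq> carrier G" "set b \<subseteq> carrier G" "x \<in> carrier G" using Cons.prems(1) sy ys by auto
  have "lprod G ys = lprod G a \<otimes> (x \<otimes> lprod G b)" using c ys by (simp add: lprod_append)
  also have "\<dots> = (lprod G a \<otimes> x) \<otimes> lprod G b" using c by (simp add: m_assoc)
  also have "lprod G a \<otimes> x = x \<otimes> lprod G a"
  proof -
    have "\<forall>y\<in>set a. x \<otimes> y = y \<otimes> x" using Cons.prems(2) sy ys by auto
    thus ?thesis using lprod_comm[of x a] c by simp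
  qed
  also have "(x \<otimes> lprod G a) \<otimes> lprod G b = x \<otimes> lprod G (a @ b)" using c by (simp add: m_assoc lprod_append)
  also have "lprod G (a @ b) = lprod G xs"
    using Cons.IH[of "a@b"] Cons.prems ms by auto
  finally show ?case by simp
qed

lemma (in group) lprod_hom:
  assumes "h \<in> hom G H" "group H" "set xs \<subseteq> carrier G"
  shows "h (lprod G xs) = lprod H (map h xs)"
  using assms(3)
proof (induction xs)
  case Nil
  have "group_hom G H h" using assms by (simp add: group_hom.intro group_hom_axioms.intro is_group)
  then show ?case by (simp add: lprod_def group_hom.hom_one)
next
  case (Cons x xs)
  then show ?case using assms(1) by (simp add: lprod_def hom_mult lprod_closed[unfolded lprod_def])
qed


lemma seqs_add[simp]: "S + T \<in> seqs G A \<longleftrightarrow> S \<in> seqs G A \<and> T \<in> seqs G A"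
  by (auto simp: seqs_def)

lemma seqs_add_mset[simp]: "add_mset x S \<in> seqs G A \<longleftrightarrow> x \<in> A \<and> S \<in> seqs G A"
  by (auto simp: seqs_def)

lemma seqs_empty[simp]: "{#} \<in> seqs G A"
  by (auto simp: seqs_def)

lemma seqs_single[simp]: "{#x#} \<in> seqs G A \<longleftrightarrow> x \<in> A"
  by (auto simp: seqs_def)

lemma seq_equiv_refl: "seq_equiv G S S" by (simp add: seq_equiv_def)
lemma seq_equiv_sym: "seq_equiv G S S' \<Longrightarrow> seq_equiv G S' S" by (simp add: seq_equiv_def)

lemma (in monoid) prods_carrier: "S \<in> seqs G (carrier G) \<Longrightarrow> prods G S \<subseteq> carrier G"
  by (auto simp: prods_def seqs_def intro!: lprod_closed)

lemma (in monoid) prods_mult_subset: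
  assumes "S \<in> seqs G (carrier G)" "T \<in> seqs G (carrier G)"
  shows "prods G S <#> prods G T \<subseteq> prods G (S + T)"
proof
  fix z assume "z \<in> prods G S <#> prods G T"
  then obtain xs ys where "mset xs = S" "mset ys = T" "z = lprod G xs \<otimes> lprod G ys"
    by (auto simp: set_mult_def prods_def)
  moreover have "set xs \<subseteq> carrier G" "set ys \<subseteq> carrier G" using assms calculation
    by (auto simp: seqs_def)
  ultimately show "z \<in> prods G (S + T)" unfolding prods_def
    by (auto intro!: exI[of _ "xs @ ys"] simp: lprod_append)
qed

lemma (in group) prods_iff_zss:
  assumes "S \<in> seqs G (carrier G)" "g \<in> carrier G"
  shows "g \<in> prods G S \<longleftrightarrow> S + {#inv g#} \<in> zss G"
proof
  assume "g \<in> prods G S"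
  then obtain xs where xs: "mset xs = S" "lprod G xs = g" by (auto simp: prods_def)
  have c: "set xs \<subseteq> carrier G" using xs assms by (auto simp: seqs_def)
  have "lprod G (xs @ [inv g]) = \<one>" using c xs assms by (simp add: lprod_append)
  moreover have "mset (xs @ [inv g]) = S + {#inv g#}" using xs by simp
  ultimately show "S + {#inv g#} \<in> zss G" using assms unfolding zss_def prods_def
    by (auto intro!: exI[of _ "xs @ [inv g]"])
next
  assume "S + {#inv g#} \<in> zss G"
  then obtain ys where ys: "mset ys = S + {#inv g#}" "lprod G ys = \<one>"
    by (auto simp: zss_def prods_def)
  have "inv g \<in># mset ys" using ys(1) by simp
  hence "inv g \<in> set ys" by simp
  then obtain a b where ab: "ys = a @ inv g # b" by (meson split_list)
  have ms: "mset (b @ a) = S" using ys ab by (simp add: add.commute)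
  have c: "set a \<subseteq> carrier G" "set b \<subseteq> carrier G" using ms assms
    by (auto simp: seqs_def dest: arg_cong[where f=set_mset])
  have "lprod G a \<otimes> (inv g \<otimes> lprod G b) = \<one>" using ys ab c assms by (simp add: lprod_append)
  then have "(inv g \<otimes> lprod G b) \<otimes> lprod G a = \<one>" using c assms by (simp add: inv_comm)
  then have "inv g \<otimes> (lprod G b \<otimes> lprod G a) = inv g \<otimes> g" using c assms by (simp add: m_assoc)
  moreover have "lprod G b \<otimes> lprod G a \<in> carrier G" using c by simp
  ultimately have "lprod G b \<otimes> lprod G a = g" using assms(2) l_cancel inv_closed by blast
  then have "lprod G (b @ a) = g" using c by (simp add: lprod_append)
  thus "g \<in> prods G S" using ms unfolding prods_def by blast
qed

lemma (in group) equiv_prods_sub: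
  assumes "S \<in> seqs G (carrier G)" "S' \<in> seqs G (carrier G)" "seq_equiv G S S'"
  shows "prods G S \<subseteq> prods G S'"
proof
  fix g assume g: "g \<in> prods G S"
  then have gc: "g \<in> carrier G" using prods_carrier assms by auto
  have "S + {#inv g#} \<in> zss G" using prods_iff_zss assms gc g by blast
  moreover have "{#inv g#} \<in> seqs G (carrier G)" using gc by simp
  ultimately have "S' + {#inv g#} \<in> zss G" using assms(3) unfolding seq_equiv_def by blast
  thus "g \<in> prods G S'" using prods_iff_zss assms gc by blast
qed

lemma (in group) equiv_prods:
  assumes "S \<in> seqs G (carrier G)" "S' \<in> seqs G (carrier G)" "seq_equiv G S S'"
  shows "prods G S = prods G S'"
  using equiv_prods_sub assms seq_equiv_sym by (metis subset_antisym)

lemma (in monoid) prods_single[simp]: "x \<in> carrier G \<Longrightarrow> prods G {#x#} = {x}"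
  by (auto simp: prods_def)

lemma (in group) single_not_equiv:
  "g \<in> carrier G \<Longrightarrow> h \<in> carrier G \<Longrightarrow> g \<noteq> h \<Longrightarrow> \<not> seq_equiv G {#g#} {#h#}"
  using equiv_prods[of "{#g#}" "{#h#}"] by auto

lemma (in group) card_classes:
  assumes "finite (carrier G)"
  shows "infinite (class_semigroup G) \<or> card (carrier G) \<le> card (class_semigroup G)"
proof (cases "finite (class_semigroup G)")
  case True
  have "inj_on (\<lambda>g. seq_class G {#g#}) (carrier G)"
  proof (rule inj_onI)
    fix g h assume gh: "g \<in> carrier G" "h \<in> carrier G" "seq_class G {#g#} = seq_class G {#h#}"
    have "{#h#} \<in> seq_class G {#h#}" using gh by (simp add: seq_class_def seq_equiv_refl)
    then have "{#h#} \<in> seq_class G {#g#}" using gh(3) by simp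
    then have "seq_equiv G {#g#} {#h#}" using gh by (simp add: seq_class_def)
    thus "g = h" using single_not_equiv gh by blast
  qed
  moreover have "(\<lambda>g. seq_class G {#g#}) ` carrier G \<subseteq> class_semigroup G"
    by (auto simp: class_semigroup_def)
  ultimately show ?thesis using card_inj_on_le True by blast
qed simp


lemma (in group) center_carrier: "z \<in> grp_center G \<Longrightarrow> z \<in> carrier G"
  by (simp add: grp_center_def)

lemma (in group) lprod_center_comm:
  "z \<in> grp_center G \<Longrightarrow> set xs \<subseteq> carrier G \<Longrightarrow> z \<otimes> lprod G xs = lprod G xs \<otimes> z"
  by (rule lprod_comm) (auto simp: grp_center_def)

lemma (in group) lprod_split_mid:
  assumes "z \<in> grp_center G" "set a \<subseteq> carrier G" "set b \<subseteq> carrier G"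
  shows "lprod G (a @ z # b) = z \<otimes> lprod G (a @ b)"
proof -
  have zc: "z \<in> carrier G" using assms center_carrier by auto
  have "lprod G (a @ z # b) = lprod G a \<otimes> (z \<otimes> lprod G b)" using assms zc by (simp add: lprod_append)
  also have "\<dots> = (lprod G a \<otimes> z) \<otimes> lprod G b" using assms zc by (simp add: m_assoc)
  also have "lprod G a \<otimes> z = z \<otimes> lprod G a" using lprod_center_comm assms by simp
  finally show ?thesis using assms zc by (simp add: m_assoc lprod_append)
qed

lemma (in group) central_split:
  assumes "set_mset S \<subseteq> grp_center G" "mset xs = S + T" "set xs \<subseteq> carrier G"
  shows "\<exists>s t. mset s = S \<and> mset t = T \<and> lprod G xs = lprod G s \<otimes> lprod G t"
  using assms
proof (induction S arbitrary: xs)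
  case empty
  then show ?case by (intro exI[of _ "[]"] exI[of _ xs]) (simp add: lprod_closed)
next
  case (add z S)
  have "z \<in># mset xs" using add.prems by simp
  hence "z \<in> set xs" by simp
  then obtain a b where ab: "xs = a @ z # b" by (meson split_list)
  have c: "set a \<subseteq> carrier G" "set b \<subseteq> carrier G" using add.prems ab by auto
  have zc: "z \<in> grp_center G" using add.prems by simp
  have "mset (a @ b) = S + T" using add.prems ab by simp
  then obtain s t where st: "mset s = S" "mset t = T" "lprod G (a @ b) = lprod G s \<otimes> lprod G t"
    using add.IH[of "a @ b"] add.prems c by auto
  have "set_mset (mset (a@b)) = set_mset (mset s + mset t)" using \<open>mset (a @ b) = S + T\<close> st by simp
  hence "set (a@b) = set s \<union> set t" by simp
  hence cs: "set s \<subseteq> carrier G" "set t \<subseteq> carrier G" using c by auto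
  have "lprod G xs = z \<otimes> (lprod G s \<otimes> lprod G t)" using ab lprod_split_mid zc c st by simp
  also have "\<dots> = lprod G (z # s) \<otimes> lprod G t" using zc cs center_carrier by (simp add: m_assoc)
  finally show ?case using st by (intro exI[of _ "z # s"] exI[of _ t]) simp
qed

lemma (in group) prods_mult_eq:
  assumes "S \<in> seqs G (carrier G)" "T \<in> seqs G (carrier G)"
    and "\<And>xs. mset xs = S + T \<Longrightarrow> lprod G xs \<in> prods G S <#> prods G T"
  shows "prods G (S + T) = prods G S <#> prods G T"
  using prods_mult_subset[OF assms(1,2)] assms(3) by (auto simp: prods_def[of G "S + T"])

lemma (in group) central_prods:
  assumes "S \<in> seqs G (grp_center G)" "T \<in> seqs G (carrier G)"
  shows "prods G (S + T) = prods G S <#> prods G T"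
proof (rule prods_mult_eq)
  show S: "S \<in> seqs G (carrier G)" using assms center_carrier by (auto simp: seqs_def)
  show "T \<in> seqs G (carrier G)" by fact
  fix xs assume xs: "mset xs = S + T"
  have "set xs \<subseteq> carrier G" using xs S assms(2) by (auto simp: seqs_def dest!: arg_cong[where f=set_mset])
  then obtain s t where "mset s = S" "mset t = T" "lprod G xs = lprod G s \<otimes> lprod G t"
    using central_split xs assms(1) by (metis seqs_def mem_Collect_eq)
  thus "lprod G xs \<in> prods G S <#> prods G T" by (auto simp: set_mult_def prods_def)
qed

lemma (in group) equiv_from_prods:
  assumes "S \<in> seqs G (carrier G)" "S' \<in> seqs G (carrier G)"
    and "\<And>T. T \<in> seqs G (carrier G) \<Longrightarrow> prods G (S + T) = prods G (S' + T)"
  shows "seq_equiv G S S'"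
  using assms by (auto simp: seq_equiv_def zss_def)

lemma (in group) part4:
  assumes g: "g \<in> grp_center G" and h: "h \<in> carrier G"
  shows "seq_equiv G {#g, h#} {#g \<otimes> h#}"
proof (rule equiv_from_prods)
  have gc: "g \<in> carrier G" using g center_carrier by auto
  show "{#g, h#} \<in> seqs G (carrier G)" "{#g \<otimes> h#} \<in> seqs G (carrier G)" using gc h by auto
  fix T assume T: "T \<in> seqs G (carrier G)"
  show "prods G ({#g, h#} + T) = prods G ({#g \<otimes> h#} + T)"
  proof
    show "prods G ({#g, h#} + T) \<subseteq> prods G ({#g \<otimes> h#} + T)"
    proof
      fix p assume "p \<in> prods G ({#g, h#} + T)"
      then obtain xs where xs: "mset xs = {#g, h#} + T" "p = lprod G xs" by (auto simp: prods_def)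
      have "g \<in># mset xs" using xs by simp
      hence "g \<in> set xs" by simp
      then obtain a b where ab: "xs = a @ g # b" by (meson split_list)
      have msab: "mset (a @ b) = add_mset h T" using xs ab by simp
      have "h \<in># mset (a @ b)" using msab by simp
      hence "h \<in> set (a @ b)" by simp
      then obtain c d where cd: "a @ b = c @ h # d" by (meson split_list)
      have mscd: "mset (c @ d) = T" using msab cd by simp
      have cc0: "set c \<subseteq> carrier G" "set d \<subseteq> carrier G"
        using T mscd by (auto simp: seqs_def dest!: arg_cong[where f=set_mset])
      have "set (a @ b) = set (c @ h # d)" using cd by simp
      hence cc: "set c \<subseteq> carrier G" "set d \<subseteq> carrier G" "set a \<subseteq> carrier G" "set b \<subseteq> carrier G"
        using cc0 h by auto
      have "p = g \<otimes> lprod G (c @ h # d)" using xs ab lprod_split_mid[OF g] cc cd by simp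
      also have "\<dots> = g \<otimes> (lprod G c \<otimes> (h \<otimes> lprod G d))" using cc h by (simp add: lprod_append)
      also have "\<dots> = (g \<otimes> lprod G c) \<otimes> (h \<otimes> lprod G d)" using cc h gc by (simp add: m_assoc)
      also have "g \<otimes> lprod G c = lprod G c \<otimes> g" using lprod_center_comm g cc by simp
      also have "(lprod G c \<otimes> g) \<otimes> (h \<otimes> lprod G d) = lprod G (c @ (g \<otimes> h) # d)"
        using cc h gc by (simp add: lprod_append m_assoc)
      finally have "p = lprod G (c @ (g \<otimes> h) # d)" .
      moreover have "mset (c @ (g \<otimes> h) # d) = {#g \<otimes> h#} + T" using mscd by simp
      ultimately show "p \<in> prods G ({#g \<otimes> h#} + T)" unfolding prods_def by blast
    qed
  next
    show "prods G ({#g \<otimes> h#} + T) \<subseteq> prods G ({#g, h#} + T)"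
    proof
      fix p assume "p \<in> prods G ({#g \<otimes> h#} + T)"
      then obtain xs where xs: "mset xs = {#g \<otimes> h#} + T" "p = lprod G xs" by (auto simp: prods_def)
      have "g \<otimes> h \<in># mset xs" using xs by simp
      hence "g \<otimes> h \<in> set xs" by simp
      then obtain c d where cd: "xs = c @ (g \<otimes> h) # d" by (meson split_list)
      have mscd: "mset (c @ d) = T" using xs cd by simp
      have cc: "set c \<subseteq> carrier G" "set d \<subseteq> carrier G"
        using T mscd by (auto simp: seqs_def dest!: arg_cong[where f=set_mset])
      have "p = (lprod G c \<otimes> g) \<otimes> (h \<otimes> lprod G d)"
        using xs cd cc h gc by (simp add: lprod_append m_assoc)
      also have "lprod G c \<otimes> g = g \<otimes> lprod G c" using lprod_center_comm g cc by simp
      also have "(g \<otimes> lprod G c) \<otimes> (h \<otimes> lprod G d) = lprod G (g # c @ h # d)"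
        using cc h gc by (simp add: lprod_append m_assoc)
      finally have "p = lprod G (g # c @ h # d)" .
      moreover have "mset (g # c @ h # d) = {#g, h#} + T" using mscd by simp
      ultimately show "p \<in> prods G ({#g, h#} + T)" unfolding prods_def by blast
    qed
  qed
qed


lemma (in group) coset_prods:
  assumes S: "S \<in> seqs G (carrier G)" and T: "T \<in> seqs G (carrier G)" and g: "g \<in> carrier G"
    and P: "prods G S = g <# derived G (carrier G)"
  shows "prods G (S + T) = prods G S <#> prods G T"
proof (rule prods_mult_eq[OF S T])
  define H where "H = derived G (carrier G)"
  interpret N: normal H G using derived_self_is_normal H_def by simp
  define K where "K = G Mod H"
  have Kc: "comm_group K" using derived_quot_is_comm_group H_def K_def by simp
  then interpret K: comm_group K .
  have hom: "(\<lambda>a. H #> a) \<in> hom G K" using N.r_coset_hom_Mod K_def by simp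
  fix xs assume xs: "mset xs = S + T"
  have cxs: "set xs \<subseteq> carrier G" using xs S T by (auto simp: seqs_def dest!: arg_cong[where f=set_mset])
  obtain s where s: "mset s = S" using ex_mset by blast
  obtain t where t: "mset t = T" using ex_mset by blast
  have cs: "set s \<subseteq> carrier G" "set t \<subseteq> carrier G" using s t S T
    by (auto simp: seqs_def dest!: arg_cong[where f=set_mset])
  define x where "x = lprod G s"
  define y where "y = lprod G t"
  have xy: "x \<in> carrier G" "y \<in> carrier G" using cs x_def y_def by auto
  have "H #> lprod G xs = lprod K (map (\<lambda>a. H #> a) xs)"
    using lprod_hom[OF hom K.is_group cxs] .
  also have "\<dots> = lprod K (map (\<lambda>a. H #> a) (s @ t))"
  proof (rule K.lprod_perm)
    show "set (map (\<lambda>a. H #> a) xs) \<subseteq> carrier K" using hom cxs by (auto simp: hom_def)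
    then show "\<forall>x\<in>set (map (\<lambda>a. H #> a) xs). \<forall>y\<in>set (map (\<lambda>a. H #> a) xs). x \<otimes>\<^bsub>K\<^esub> y = y \<otimes>\<^bsub>K\<^esub> x"
      using K.m_comm by blast
    show "mset (map (\<lambda>a. H #> a) xs) = mset (map (\<lambda>a. H #> a) (s @ t))"
      using xs s t by simp
  qed
  also have "\<dots> = H #> lprod G (s @ t)" using lprod_hom[OF hom K.is_group] cs by simp
  also have "lprod G (s @ t) = x \<otimes> y" using cs x_def y_def by (simp add: lprod_append)
  finally have eq: "H #> lprod G xs = H #> (x \<otimes> y)" .
  have "lprod G xs \<in> H #> (x \<otimes> y)"
    using repr_independenceD[OF N.subgroup_axioms _ eq[symmetric]] cxs by simp
  then obtain h where h: "h \<in> H" "lprod G xs = h \<otimes> (x \<otimes> y)" by (auto simp: r_coset_def)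
  have "x \<in> g <# H" using P H_def s x_def by (auto simp: prods_def)
  then obtain h1 where h1: "h1 \<in> H" "x = g \<otimes> h1" by (auto simp: l_coset_def)
  have hc: "h \<in> carrier G" "h1 \<in> carrier G" using h h1 N.mem_carrier by auto
  have "lprod G xs \<otimes> inv y = h \<otimes> (g \<otimes> h1)" using h h1 hc xy g by (simp add: m_assoc)
  also have "\<dots> = g \<otimes> ((inv g \<otimes> h \<otimes> g) \<otimes> h1)" using hc g by (simp add: m_assoc[symmetric] r_inv)
  finally have "lprod G xs \<otimes> inv y \<in> g <# H"
    using N.inv_op_closed1[OF g h(1)] h1 N.m_closed by (auto simp: l_coset_def)
  hence "lprod G xs \<otimes> inv y \<in> prods G S" using P H_def by simp
  moreover have "y \<in> prods G T" using t y_def by (auto simp: prods_def)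
  moreover have "lprod G xs = (lprod G xs \<otimes> inv y) \<otimes> y" using cxs xy by (simp add: m_assoc)
  ultimately show "lprod G xs \<in> prods G S <#> prods G T" by (auto simp: set_mult_def)
qed


lemma (in group) part2:
  assumes S: "S \<in> seqs G (carrier G)" and S': "S' \<in> seqs G (carrier G)"
    and C: "(S \<in> seqs G (grp_center G) \<and> S' \<in> seqs G (grp_center G))
           \<or> (\<exists>g \<in> prods G S. prods G S = g <#\<^bsub>G\<^esub> derived G (carrier G))"
  shows "seq_equiv G S S' \<longleftrightarrow> prods G S = prods G S'"
proof
  assume "seq_equiv G S S'" thus "prods G S = prods G S'" using equiv_prods S S' by blast
next
  assume eq: "prods G S = prods G S'"
  show "seq_equiv G S S'"
  proof (rule equiv_from_prods[OF S S'])
    fix T assume T: "T \<in> seqs G (carrier G)"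
    from C show "prods G (S + T) = prods G (S' + T)"
    proof
      assume "S \<in> seqs G (grp_center G) \<and> S' \<in> seqs G (grp_center G)"
      thus ?thesis using central_prods T eq by simp
    next
      assume "\<exists>g \<in> prods G S. prods G S = g <#\<^bsub>G\<^esub> derived G (carrier G)"
      then obtain g where g: "g \<in> prods G S" "prods G S = g <# derived G (carrier G)" by blast
      have gc: "g \<in> carrier G" using g prods_carrier S by auto
      show ?thesis using coset_prods[OF S T gc g(2)] coset_prods[OF S' T gc] g(2) eq by simp
    qed
  qed
qed

lemma (in group) centralizer_subgroup:
  assumes "Y \<subseteq> carrier G"
  shows "subgroup {z \<in> carrier G. \<forall>y\<in>Y. z \<otimes> y = y \<otimes> z} G"
proof (rule subgroupI)
  show "{z \<in> carrier G. \<forall>y\<in>Y. z \<otimes> y = y \<otimes> z} \<subseteq> carrier G" by auto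
  show "{z \<in> carrier G. \<forall>y\<in>Y. z \<otimes> y = y \<otimes> z} \<noteq> {}" using assms by (auto intro!: exI[of _ \<one>])
next
  fix a assume a: "a \<in> {z \<in> carrier G. \<forall>y\<in>Y. z \<otimes> y = y \<otimes> z}"
  show "inv a \<in> {z \<in> carrier G. \<forall>y\<in>Y. z \<otimes> y = y \<otimes> z}"
  proof (safe)
    show "inv a \<in> carrier G" using a by simp
    fix y assume y: "y \<in> Y"
    have yc: "y \<in> carrier G" using y assms by auto
    have ay: "a \<otimes> y = y \<otimes> a" using a y by auto
    have ac: "a \<in> carrier G" using a by simp
    have "inv a \<otimes> y = inv a \<otimes> y \<otimes> (a \<otimes> inv a)" using ac yc by simp
    also have "\<dots> = inv a \<otimes> (y \<otimes> a) \<otimes> inv a" using ac yc by (simp add: m_assoc)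
    also have "\<dots> = inv a \<otimes> (a \<otimes> y) \<otimes> inv a" using ay by simp
    also have "\<dots> = (inv a \<otimes> a) \<otimes> y \<otimes> inv a" using ac yc by (metis inv_closed m_assoc)
    also have "\<dots> = y \<otimes> inv a" using ac yc by simp
    finally show "inv a \<otimes> y = y \<otimes> inv a" .
  qed
next
  fix a b assume a: "a \<in> {z \<in> carrier G. \<forall>y\<in>Y. z \<otimes> y = y \<otimes> z}"
    and b: "b \<in> {z \<in> carrier G. \<forall>y\<in>Y. z \<otimes> y = y \<otimes> z}"
  show "a \<otimes> b \<in> {z \<in> carrier G. \<forall>y\<in>Y. z \<otimes> y = y \<otimes> z}"
  proof (safe)
    show "a \<otimes> b \<in> carrier G" using a b by simp
    fix y assume y: "y \<in> Y"
    have yc: "y \<in> carrier G" using y assms by auto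
    have "a \<otimes> b \<otimes> y = a \<otimes> (y \<otimes> b)" using a b y yc by (simp add: m_assoc)
    also have "\<dots> = (a \<otimes> y) \<otimes> b" using a b yc by (simp add: m_assoc)
    also have "\<dots> = y \<otimes> a \<otimes> b" using a y by simp
    finally show "a \<otimes> b \<otimes> y = y \<otimes> (a \<otimes> b)" using a b yc by (simp add: m_assoc)
  qed
qed

lemma (in group) comm_gen:
  assumes A: "A \<subseteq> carrier G" and P: "\<forall>x\<in>A. \<forall>y\<in>A. x \<otimes> y = y \<otimes> x"
  shows "comm_group (subgroup_generated G A)"
proof (rule group.group_comm_groupI[OF group_subgroup_generated])
  have car: "carrier (subgroup_generated G A) = generate G A"
    using A by (simp add: carrier_subgroup_generated Int_absorb1)
  have gc: "generate G A \<subseteq> carrier G" using generate_in_carrier A by blast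
  have 1: "generate G A \<subseteq> {z \<in> carrier G. \<forall>y\<in>A. z \<otimes> y = y \<otimes> z}"
    by (rule generate_subgroup_incl[OF _ centralizer_subgroup[OF A]]) (use A P in auto)
  fix x y assume "x \<in> carrier (subgroup_generated G A)" "y \<in> carrier (subgroup_generated G A)"
  hence xy: "x \<in> generate G A" "y \<in> generate G A" using car by auto
  have "generate G A \<subseteq> {z \<in> carrier G. \<forall>w\<in>{y}. z \<otimes> w = w \<otimes> z}"
    by (rule generate_subgroup_incl[OF _ centralizer_subgroup]) (use A 1 xy gc in auto)
  hence "x \<otimes> y = y \<otimes> x" using xy by auto
  thus "x \<otimes>\<^bsub>subgroup_generated G A\<^esub> y = y \<otimes>\<^bsub>subgroup_generated G A\<^esub> x"
    by (simp add: subgroup_generated_def)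
qed

lemma (in group) part5:
  assumes S: "S \<in> seqs G (carrier G)"
  shows "card (prods G S) = 1 \<longleftrightarrow> comm_group (subgroup_generated G (set_mset S))"
proof
  have A: "set_mset S \<subseteq> carrier G" using S by (simp add: seqs_def)
  assume "card (prods G S) = 1"
  then obtain p where p: "prods G S = {p}" using card_1_singletonE by blast
  have "\<forall>x\<in>set_mset S. \<forall>y\<in>set_mset S. x \<otimes> y = y \<otimes> x"
  proof (intro ballI)
    fix x y assume x: "x \<in># S" and y: "y \<in># S"
    show "x \<otimes> y = y \<otimes> x"
    proof (cases "x = y")
      case False
      obtain R1 where R1: "S = add_mset x R1" using x by (meson multi_member_split)
      have "y \<in># R1" using y False R1 by simp
      then obtain R where R: "R1 = add_mset y R" by (meson multi_member_split)
      obtain r where r: "mset r = R" using ex_mset by blast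
      have cr: "set r \<subseteq> carrier G" using A R1 R r by auto
      have xyc: "x \<in> carrier G" "y \<in> carrier G" using A x y by auto
      have "mset (x # y # r) = S" "mset (y # x # r) = S" using R1 R r by simp_all
      hence "lprod G (x # y # r) \<in> prods G S" "lprod G (y # x # r) \<in> prods G S"
        unfolding prods_def by blast+
      hence "x \<otimes> (y \<otimes> lprod G r) = y \<otimes> (x \<otimes> lprod G r)" using p by simp
      hence "(x \<otimes> y) \<otimes> lprod G r = (y \<otimes> x) \<otimes> lprod G r" using xyc cr by (simp add: m_assoc)
      thus ?thesis using xyc cr r_cancel by (meson lprod_closed m_closed)
    qed simp
  qed
  thus "comm_group (subgroup_generated G (set_mset S))" using comm_gen A by blast
next
  have A: "set_mset S \<subseteq> carrier G" using S by (simp add: seqs_def)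
  assume C: "comm_group (subgroup_generated G (set_mset S))"
  have P: "\<forall>x\<in>set_mset S. \<forall>y\<in>set_mset S. x \<otimes> y = y \<otimes> x"
  proof (intro ballI)
    fix x y assume "x \<in># S" "y \<in># S"
    hence "x \<in> carrier (subgroup_generated G (set_mset S))" "y \<in> carrier (subgroup_generated G (set_mset S))"
      using A by (auto simp: carrier_subgroup_generated Int_absorb1 intro: generate.incl)
    hence "x \<otimes>\<^bsub>subgroup_generated G (set_mset S)\<^esub> y = y \<otimes>\<^bsub>subgroup_generated G (set_mset S)\<^esub> x"
      by (rule comm_groupE(4)[OF C])
    thus "x \<otimes> y = y \<otimes> x" by (simp add: subgroup_generated_def)
  qed
  obtain s where s: "mset s = S" using ex_mset by blast
  have "prods G S = {lprod G s}"
  proof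
    show "{lprod G s} \<subseteq> prods G S" using s by (auto simp: prods_def)
    show "prods G S \<subseteq> {lprod G s}"
    proof
      fix q assume "q \<in> prods G S"
      then obtain xs where xs: "mset xs = S" "q = lprod G xs" by (auto simp: prods_def)
      have sx: "set xs = set_mset S" using xs(1) by (metis set_mset_mset)
      have "lprod G xs = lprod G s"
      proof (rule lprod_perm)
        show "set xs \<subseteq> carrier G" using sx A by simp
        show "\<forall>x\<in>set xs. \<forall>y\<in>set xs. x \<otimes> y = y \<otimes> x" using sx P by simp
        show "mset xs = mset s" using xs s by simp
      qed
      thus "q \<in> {lprod G s}" using xs by simp
    qed
  qed
  thus "card (prods G S) = 1" by simp
qed


theorem lemma3p6:
  fixes G :: "('a, 'b) monoid_scheme" and S :: "'a multiset"
  assumes "group G" and "finite (carrier G)" and "S \<in> seqs G (carrier G)"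
  shows
    "(\<forall>S' \<in> seqs G (carrier G). seq_equiv G S S' \<longrightarrow> prods G S = prods G S')
     \<and> (\<forall>S' \<in> seqs G (carrier G).
          ((S \<in> seqs G (grp_center G) \<and> S' \<in> seqs G (grp_center G))
           \<or> (\<exists>g \<in> prods G S. prods G S = g <#\<^bsub>G\<^esub> derived G (carrier G)))
          \<longrightarrow> (seq_equiv G S S' \<longleftrightarrow> prods G S = prods G S'))
     \<and> (\<forall>g \<in> carrier G. \<forall>h \<in> carrier G. g \<noteq> h \<longrightarrow> \<not> seq_equiv G {#g#} {#h#})
     \<and> (infinite (class_semigroup G) \<or> card (carrier G) \<le> card (class_semigroup G))
     \<and> (\<forall>g \<in> grp_center G. \<forall>h \<in> carrier G. seq_equiv G {#g, h#} {#g \<otimes>\<^bsub>G\<^esub> h#})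
     \<and> (card (prods G S) = 1 \<longleftrightarrow> comm_group (subgroup_generated G (set_mset S)))"
proof -
  interpret group G by fact
  show ?thesis
  proof (intro conjI)
    show "\<forall>S' \<in> seqs G (carrier G). seq_equiv G S S' \<longrightarrow> prods G S = prods G S'"
      using equiv_prods[OF assms(3)] by blast
    show "\<forall>S' \<in> seqs G (carrier G).
          ((S \<in> seqs G (grp_center G) \<and> S' \<in> seqs G (grp_center G))
           \<or> (\<exists>g \<in> prods G S. prods G S = g <#\<^bsub>G\<^esub> derived G (carrier G)))
          \<longrightarrow> (seq_equiv G S S' \<longleftrightarrow> prods G S = prods G S')"
      using part2[OF assms(3)] by blast
    show "\<forall>g \<in> carrier G. \<forall>h \<in> carrier G. g \<noteq> h \<longrightarrow> \<not> seq_equiv G {#g#} {#h#}"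
      using single_not_equiv by blast
    show "infinite (class_semigroup G) \<or> card (carrier G) \<le> card (class_semigroup G)"
      by (rule card_classes[OF assms(2)])
    show "\<forall>g \<in> grp_center G. \<forall>h \<in> carrier G. seq_equiv G {#g, h#} {#g \<otimes>\<^bsub>G\<^esub> h#}"
      using part4 by blast
    show "card (prods G S) = 1 \<longleftrightarrow> comm_group (subgroup_generated G (set_mset S))"
      by (rule part5[OF assms(3)])
  qed
qed

end
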